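(* Let $\mathcal{C}$ be a skeletally small triangulated category, $H$ a $\mathbb{Q}$-subspace of $G(\mathcal{C})_{\mathbb{Q}}$, and $\mathcal{I}(H)$ the set of dense subcategories $\mathcal{D}$ of $\mathcal{C}$ with $\operatorname{image}(G(\mathcal{D})_{\mathbb{Q}}\to G(\mathcal{C})_{\mathbb{Q}})=H$, ordered by inclusion. Then every maximal element of $\mathcal{I}(H)$ is a radical dense subcategory of $\mathcal{C}$.
   Context: $G(-)$ denotes the Grothendieck group of a triangulated category; $H_{\mathbb{Q}}=H\otimes_{\mathbb{Z}}\mathbb{Q}$. A dense subcategory is a triangulated subcategory $\mathcal{D}$ (full, closed under $[\pm1]$, isomorphisms and cones) such that for every $U\in\mathcal{C}$ there is $V$ with $U\oplus V\in\mathcal{D}$; it is radical if $U^n\in\mathcal{D}$ for some $n\ge1$ implies $U\in\mathcal{D}$. *)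

theory Defs
  imports Complex_Main
begin

text \<open>Objects have type 'o, morphisms have type 'm (every element of 'm is a morphism).
Since objects form a type (hence a set), the category is (skeletally) small.\<close>

record ('o, 'm) tricat =
  tsrc  :: "'m \<Rightarrow> 'o"
  ttgt  :: "'m \<Rightarrow> 'o"
  tcomp :: "'m \<Rightarrow> 'm \<Rightarrow> 'm"   (* tcomp g f = g o f *)
  tid   :: "'o \<Rightarrow> 'm"
  tadd  :: "'m \<Rightarrow> 'm \<Rightarrow> 'm"
  tneg  :: "'m \<Rightarrow> 'm"
  tzero :: "'o \<Rightarrow> 'o \<Rightarrow> 'm"
  tsh   :: "'o \<Rightarrow> 'o"
  tshm  :: "'m \<Rightarrow> 'm"
  tdist :: "('m \<times> 'm \<times> 'm) set"

definition hom :: "('o, 'm) tricat \<Rightarrow> 'o \<Rightarrow> 'o \<Rightarrow> 'm set" where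
  "hom C X Y = {f. tsrc C f = X \<and> ttgt C f = Y}"

definition is_iso :: "('o, 'm) tricat \<Rightarrow> 'm \<Rightarrow> bool" where
  "is_iso C f \<longleftrightarrow> (\<exists>g \<in> hom C (ttgt C f) (tsrc C f).
      tcomp C g f = tid C (tsrc C f) \<and> tcomp C f g = tid C (ttgt C f))"

definition isomorphic :: "('o, 'm) tricat \<Rightarrow> 'o \<Rightarrow> 'o \<Rightarrow> bool" where
  "isomorphic C X Y \<longleftrightarrow> (\<exists>f \<in> hom C X Y. is_iso C f)"

definition is_category :: "('o, 'm) tricat \<Rightarrow> bool" where
  "is_category C \<longleftrightarrow>
     (\<forall>f g. tsrc C g = ttgt C f \<longrightarrow> tcomp C g f \<in> hom C (tsrc C f) (ttgt C g)) \<and>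
     (\<forall>X. tid C X \<in> hom C X X) \<and>
     (\<forall>f. tcomp C f (tid C (tsrc C f)) = f \<and> tcomp C (tid C (ttgt C f)) f = f) \<and>
     (\<forall>f g h. tsrc C g = ttgt C f \<longrightarrow> tsrc C h = ttgt C g \<longrightarrow>
        tcomp C h (tcomp C g f) = tcomp C (tcomp C h g) f)"

definition is_preadditive :: "('o, 'm) tricat \<Rightarrow> bool" where
  "is_preadditive C \<longleftrightarrow> is_category C \<and>
     (\<forall>X Y. tzero C X Y \<in> hom C X Y) \<and>
     (\<forall>X Y f g. f \<in> hom C X Y \<longrightarrow> g \<in> hom C X Y \<longrightarrow> tadd C f g \<in> hom C X Y) \<and>
     (\<forall>f. tneg C f \<in> hom C (tsrc C f) (ttgt C f)) \<and>
     (\<forall>X Y f g h. f \<in> hom C X Y \<longrightarrow> g \<in> hom C X Y \<longrightarrow> h \<in> hom C X Y \<longrightarrow>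
        tadd C (tadd C f g) h = tadd C f (tadd C g h) \<and>
        tadd C f g = tadd C g f \<and>
        tadd C f (tzero C X Y) = f \<and>
        tadd C f (tneg C f) = tzero C X Y) \<and>
     (\<forall>V X Y W f g h k. f \<in> hom C X Y \<longrightarrow> g \<in> hom C X Y \<longrightarrow> h \<in> hom C Y W \<longrightarrow> k \<in> hom C V X \<longrightarrow>
        tcomp C h (tadd C f g) = tadd C (tcomp C h f) (tcomp C h g) \<and>
        tcomp C (tadd C f g) k = tadd C (tcomp C f k) (tcomp C g k))"

definition is_zero_obj :: "('o, 'm) tricat \<Rightarrow> 'o \<Rightarrow> bool" where
  "is_zero_obj C Z \<longleftrightarrow> tid C Z = tzero C Z Z"

definition is_biprod :: "('o, 'm) tricat \<Rightarrow> 'o \<Rightarrow> 'o \<Rightarrow> 'o \<Rightarrow> bool" where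
  "is_biprod C X Y S \<longleftrightarrow> (\<exists>i1 i2 p1 p2.
     i1 \<in> hom C X S \<and> i2 \<in> hom C Y S \<and> p1 \<in> hom C S X \<and> p2 \<in> hom C S Y \<and>
     tcomp C p1 i1 = tid C X \<and> tcomp C p2 i2 = tid C Y \<and>
     tcomp C p2 i1 = tzero C X Y \<and> tcomp C p1 i2 = tzero C Y X \<and>
     tadd C (tcomp C i1 p1) (tcomp C i2 p2) = tid C S)"

definition is_additive :: "('o, 'm) tricat \<Rightarrow> bool" where
  "is_additive C \<longleftrightarrow> is_preadditive C \<and> (\<exists>Z. is_zero_obj C Z) \<and>
     (\<forall>X Y. \<exists>S. is_biprod C X Y S)"

definition shift_ok :: "('o, 'm) tricat \<Rightarrow> bool" where
  "shift_ok C \<longleftrightarrow>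
     (\<forall>f. tshm C f \<in> hom C (tsh C (tsrc C f)) (tsh C (ttgt C f))) \<and>
     (\<forall>X. tshm C (tid C X) = tid C (tsh C X)) \<and>
     (\<forall>f g. tsrc C g = ttgt C f \<longrightarrow> tshm C (tcomp C g f) = tcomp C (tshm C g) (tshm C f)) \<and>
     (\<forall>X Y f g. f \<in> hom C X Y \<longrightarrow> g \<in> hom C X Y \<longrightarrow>
        tshm C (tadd C f g) = tadd C (tshm C f) (tshm C g)) \<and>
     (\<forall>X Y. bij_betw (tshm C) (hom C X Y) (hom C (tsh C X) (tsh C Y))) \<and>
     (\<forall>Y. \<exists>X. isomorphic C (tsh C X) Y)"

definition is_triangle :: "('o, 'm) tricat \<Rightarrow> 'm \<times> 'm \<times> 'm \<Rightarrow> bool" where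
  "is_triangle C T \<longleftrightarrow> (case T of (f, g, h) \<Rightarrow>
     tsrc C g = ttgt C f \<and> tsrc C h = ttgt C g \<and> ttgt C h = tsh C (tsrc C f))"

definition tri_morph :: "('o, 'm) tricat \<Rightarrow> 'm \<times> 'm \<times> 'm \<Rightarrow> 'm \<times> 'm \<times> 'm \<Rightarrow> 'm \<Rightarrow> 'm \<Rightarrow> 'm \<Rightarrow> bool" where
  "tri_morph C T T' a b c \<longleftrightarrow> (case T of (f, g, h) \<Rightarrow> case T' of (f', g', h') \<Rightarrow>
     a \<in> hom C (tsrc C f) (tsrc C f') \<and> b \<in> hom C (ttgt C f) (ttgt C f') \<and>
     c \<in> hom C (ttgt C g) (ttgt C g') \<and>
     tcomp C f' a = tcomp C b f \<and> tcomp C g' b = tcomp C c g \<and>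
     tcomp C h' c = tcomp C (tshm C a) h)"

definition is_triangulated :: "('o, 'm) tricat \<Rightarrow> bool" where
  "is_triangulated C \<longleftrightarrow> is_additive C \<and> shift_ok C \<and>
     (\<forall>T \<in> tdist C. is_triangle C T) \<and>
     \<comment> \<open>TR1\<close>
     (\<forall>X Z. is_zero_obj C Z \<longrightarrow> (tid C X, tzero C X Z, tzero C Z (tsh C X)) \<in> tdist C) \<and>
     (\<forall>T T' a b c. T \<in> tdist C \<longrightarrow> is_triangle C T' \<longrightarrow> tri_morph C T T' a b c \<longrightarrow>
        is_iso C a \<longrightarrow> is_iso C b \<longrightarrow> is_iso C c \<longrightarrow> T' \<in> tdist C) \<and>
     (\<forall>f. \<exists>g h. (f, g, h) \<in> tdist C) \<and>
     \<comment> \<open>TR2 (rotation)\<close>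
     (\<forall>f g h. is_triangle C (f, g, h) \<longrightarrow>
        ((f, g, h) \<in> tdist C \<longleftrightarrow> (g, h, tneg C (tshm C f)) \<in> tdist C)) \<and>
     \<comment> \<open>TR3\<close>
     (\<forall>f g h f' g' h' a b. (f, g, h) \<in> tdist C \<longrightarrow> (f', g', h') \<in> tdist C \<longrightarrow>
        a \<in> hom C (tsrc C f) (tsrc C f') \<longrightarrow> b \<in> hom C (ttgt C f) (ttgt C f') \<longrightarrow>
        tcomp C f' a = tcomp C b f \<longrightarrow>
        (\<exists>c. tri_morph C (f, g, h) (f', g', h') a b c)) \<and>
     \<comment> \<open>TR4 (octahedral axiom)\<close>
     (\<forall>u v j d l e m n. tsrc C v = ttgt C u \<longrightarrow>
        (u, j, d) \<in> tdist C \<longrightarrow> (v, l, e) \<in> tdist C \<longrightarrow> (tcomp C v u, m, n) \<in> tdist C \<longrightarrow>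
        (\<exists>a b. (a, b, tcomp C (tshm C j) e) \<in> tdist C \<and>
           tcomp C a j = tcomp C m v \<and> tcomp C n a = d \<and>
           tcomp C b m = l \<and> tcomp C e b = tcomp C (tshm C u) n))"

text \<open>Full subcategories are given by their sets of objects.\<close>
definition triangulated_subcat :: "('o, 'm) tricat \<Rightarrow> 'o set \<Rightarrow> bool" where
  "triangulated_subcat C D \<longleftrightarrow>
     (\<forall>X Y. X \<in> D \<longrightarrow> isomorphic C X Y \<longrightarrow> Y \<in> D) \<and>
     (\<forall>X. X \<in> D \<longrightarrow> tsh C X \<in> D) \<and>
     (\<forall>X. tsh C X \<in> D \<longrightarrow> X \<in> D) \<and>
     (\<forall>f g h. (f, g, h) \<in> tdist C \<longrightarrow> tsrc C f \<in> D \<longrightarrow> ttgt C f \<in> D \<longrightarrow> ttgt C g \<in> D)"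

definition dense_subcat :: "('o, 'm) tricat \<Rightarrow> 'o set \<Rightarrow> bool" where
  "dense_subcat C D \<longleftrightarrow> triangulated_subcat C D \<and>
     (\<forall>U. \<exists>V S. is_biprod C U V S \<and> S \<in> D)"

primrec hsum :: "('o, 'm) tricat \<Rightarrow> 'o \<Rightarrow> 'o \<Rightarrow> (nat \<Rightarrow> 'm) \<Rightarrow> nat \<Rightarrow> 'm" where
  "hsum C X Y F 0 = tzero C X Y"
| "hsum C X Y F (Suc n) = tadd C (hsum C X Y F n) (F n)"

definition is_power :: "('o, 'm) tricat \<Rightarrow> 'o \<Rightarrow> nat \<Rightarrow> 'o \<Rightarrow> bool" where
  "is_power C U n P \<longleftrightarrow> (\<exists>i p :: nat \<Rightarrow> 'm.
     (\<forall>k<n. i k \<in> hom C U P \<and> p k \<in> hom C P U) \<and>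
     (\<forall>k<n. \<forall>l<n. tcomp C (p k) (i l) = (if k = l then tid C U else tzero C U U)) \<and>
     hsum C P P (\<lambda>k. tcomp C (i k) (p k)) n = tid C P)"

definition radical_subcat :: "('o, 'm) tricat \<Rightarrow> 'o set \<Rightarrow> bool" where
  "radical_subcat C D \<longleftrightarrow>
     (\<forall>U n P. n \<ge> 1 \<longrightarrow> is_power C U n P \<longrightarrow> P \<in> D \<longrightarrow> U \<in> D)"

text \<open>G(C)_Q = (free Q-vector space on the objects) / (Q-span of [Y]-[X]-[Z] for
distinguished triangles X -> Y -> Z -> X[1]). A Q-subspace of G(C)_Q is represented
by its preimage in the free space, i.e. a subspace containing the relations.\<close>

definition free_Q :: "('o \<Rightarrow> rat) set" where
  "free_Q = {v. finite {x. v x \<noteq> 0}}"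

definition gen :: "'o \<Rightarrow> 'o \<Rightarrow> rat" where
  "gen X = (\<lambda>Y. if Y = X then 1 else 0)"

inductive_set qspan :: "('o \<Rightarrow> rat) set \<Rightarrow> ('o \<Rightarrow> rat) set" for S where
  zero: "(\<lambda>_. 0) \<in> qspan S"
| base: "v \<in> S \<Longrightarrow> v \<in> qspan S"
| add: "u \<in> qspan S \<Longrightarrow> w \<in> qspan S \<Longrightarrow> (\<lambda>x. u x + w x) \<in> qspan S"
| smult: "u \<in> qspan S \<Longrightarrow> (\<lambda>x. c * u x) \<in> qspan S"

definition groth_rels :: "('o, 'm) tricat \<Rightarrow> ('o \<Rightarrow> rat) set" where
  "groth_rels C = {(\<lambda>x. gen (ttgt C f) x - gen (tsrc C f) x - gen (ttgt C g) x)
                   | f g h. (f, g, h) \<in> tdist C}"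

definition is_Q_subspace :: "('o \<Rightarrow> rat) set \<Rightarrow> bool" where
  "is_Q_subspace H \<longleftrightarrow> H \<subseteq> free_Q \<and> (\<lambda>_. 0) \<in> H \<and>
     (\<forall>u \<in> H. \<forall>w \<in> H. (\<lambda>x. u x + w x) \<in> H) \<and>
     (\<forall>c. \<forall>u \<in> H. (\<lambda>x. c * u x) \<in> H)"

text \<open>Preimage in the free space of image(G(D)_Q -> G(C)_Q): the span of the
classes of objects of D, plus the relations.\<close>
definition image_GQ :: "('o, 'm) tricat \<Rightarrow> 'o set \<Rightarrow> ('o \<Rightarrow> rat) set" where
  "image_GQ C D = qspan (gen ` D \<union> groth_rels C)"

definition I_H :: "('o, 'm) tricat \<Rightarrow> ('o \<Rightarrow> rat) set \<Rightarrow> 'o set set" where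
  "I_H C H = {D. dense_subcat C D \<and> image_GQ C D = H}"

end

theory Submission
  imports Defs
begin

locale tri =
  fixes C :: "('o,'m) tricat"
  assumes T: "is_triangulated C"
begin

lemma Tadd: "is_additive C" by (insert T[unfolded is_triangulated_def]; elim conjE; blast)
lemma Tpre: "is_preadditive C" using Tadd unfolding is_additive_def by blast
lemma Tcat: "is_category C" using Tpre unfolding is_preadditive_def by blast
lemma Tsh: "shift_ok C" by (insert T[unfolded is_triangulated_def]; elim conjE; blast)

lemma dist_tri: "T' \<in> tdist C \<Longrightarrow> is_triangle C T'" by (insert T[unfolded is_triangulated_def]; elim conjE; blast)
lemma TR1: "is_zero_obj C Z \<Longrightarrow> (tid C X, tzero C X Z, tzero C Z (tsh C X)) \<in> tdist C"
  by (insert T[unfolded is_triangulated_def]; elim conjE; blast)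
lemma TR1iso: "T1 \<in> tdist C \<Longrightarrow> is_triangle C T2 \<Longrightarrow> tri_morph C T1 T2 a b c \<Longrightarrow>
        is_iso C a \<Longrightarrow> is_iso C b \<Longrightarrow> is_iso C c \<Longrightarrow> T2 \<in> tdist C"
  by (insert T[unfolded is_triangulated_def]; elim conjE; blast)
lemma TR1ex: "\<exists>g h. (f, g, h) \<in> tdist C" by (insert T[unfolded is_triangulated_def]; elim conjE; blast)
lemma TR2: "is_triangle C (f, g, h) \<Longrightarrow> (f, g, h) \<in> tdist C \<Longrightarrow> (g, h, tneg C (tshm C f)) \<in> tdist C"
  by (insert T[unfolded is_triangulated_def]; elim conjE; blast)
lemma TR3: assumes "(f, g, h) \<in> tdist C" "(f', g', h') \<in> tdist C"
        "a \<in> hom C (tsrc C f) (tsrc C f')" "b \<in> hom C (ttgt C f) (ttgt C f')"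
        "tcomp C f' a = tcomp C b f"
      shows "\<exists>c. tri_morph C (f, g, h) (f', g', h') a b c"
proof -
  have "\<forall>f g h f' g' h' a b. (f, g, h) \<in> tdist C \<longrightarrow> (f', g', h') \<in> tdist C \<longrightarrow>
        a \<in> hom C (tsrc C f) (tsrc C f') \<longrightarrow> b \<in> hom C (ttgt C f) (ttgt C f') \<longrightarrow>
        tcomp C f' a = tcomp C b f \<longrightarrow>
        (\<exists>c. tri_morph C (f, g, h) (f', g', h') a b c)"
    using T unfolding is_triangulated_def by (elim conjE) assumption
  thus "?thesis" using assms by blast
qed
lemma zero_ex: "\<exists>Z. is_zero_obj C Z" using Tadd unfolding is_additive_def by blast

lemma cat1: "\<forall>f g. tsrc C g = ttgt C f \<longrightarrow> tcomp C g f \<in> hom C (tsrc C f) (ttgt C g)"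
  using Tcat[unfolded is_category_def, THEN conjunct1] .
lemma cat2: "\<forall>X. tid C X \<in> hom C X X"
  using Tcat[unfolded is_category_def, THEN conjunct2, THEN conjunct1] .
lemma cat3: "\<forall>f. tcomp C f (tid C (tsrc C f)) = f \<and> tcomp C (tid C (ttgt C f)) f = f"
  using Tcat[unfolded is_category_def, THEN conjunct2, THEN conjunct2, THEN conjunct1] .
lemma cat4: "\<forall>f g h. tsrc C g = ttgt C f \<longrightarrow> tsrc C h = ttgt C g \<longrightarrow>
        tcomp C h (tcomp C g f) = tcomp C (tcomp C h g) f"
  using Tcat[unfolded is_category_def, THEN conjunct2, THEN conjunct2, THEN conjunct2] .
lemma pre1: "\<forall>X Y. tzero C X Y \<in> hom C X Y"
  using Tpre[unfolded is_preadditive_def, THEN conjunct2, THEN conjunct1] .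
lemma pre2: "\<forall>X Y f g. f \<in> hom C X Y \<longrightarrow> g \<in> hom C X Y \<longrightarrow> tadd C f g \<in> hom C X Y"
  using Tpre[unfolded is_preadditive_def, THEN conjunct2, THEN conjunct2, THEN conjunct1] .
lemma pre3: "\<forall>f. tneg C f \<in> hom C (tsrc C f) (ttgt C f)"
  using Tpre[unfolded is_preadditive_def, THEN conjunct2, THEN conjunct2, THEN conjunct2, THEN conjunct1] .
lemma pre4: "\<forall>X Y f g h. f \<in> hom C X Y \<longrightarrow> g \<in> hom C X Y \<longrightarrow> h \<in> hom C X Y \<longrightarrow>
        tadd C (tadd C f g) h = tadd C f (tadd C g h) \<and>
        tadd C f g = tadd C g f \<and>
        tadd C f (tzero C X Y) = f \<and>
        tadd C f (tneg C f) = tzero C X Y"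
  using Tpre[unfolded is_preadditive_def, THEN conjunct2, THEN conjunct2, THEN conjunct2, THEN conjunct2, THEN conjunct1] .
lemma pre5: "\<forall>V X Y W f g h k. f \<in> hom C X Y \<longrightarrow> g \<in> hom C X Y \<longrightarrow> h \<in> hom C Y W \<longrightarrow> k \<in> hom C V X \<longrightarrow>
        tcomp C h (tadd C f g) = tadd C (tcomp C h f) (tcomp C h g) \<and>
        tcomp C (tadd C f g) k = tadd C (tcomp C f k) (tcomp C g k)"
  using Tpre[unfolded is_preadditive_def, THEN conjunct2, THEN conjunct2, THEN conjunct2, THEN conjunct2, THEN conjunct2] .

lemma comp_src[simp]: "tsrc C g = ttgt C f \<Longrightarrow> tsrc C (tcomp C g f) = tsrc C f"
  using cat1 unfolding hom_def by blast
lemma comp_tgt[simp]: "tsrc C g = ttgt C f \<Longrightarrow> ttgt C (tcomp C g f) = ttgt C g"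
  using cat1 unfolding hom_def by blast
lemma id_src[simp]: "tsrc C (tid C X) = X" using cat2 unfolding hom_def by blast
lemma id_tgt[simp]: "ttgt C (tid C X) = X" using cat2 unfolding hom_def by blast
lemma comp_id_r[simp]: "tsrc C f = X \<Longrightarrow> tcomp C f (tid C X) = f"
  using cat3 by blast
lemma comp_id_l[simp]: "ttgt C f = X \<Longrightarrow> tcomp C (tid C X) f = f"
  using cat3 by blast
lemma assoc: "tsrc C g = ttgt C f \<Longrightarrow> tsrc C h = ttgt C g \<Longrightarrow>
        tcomp C h (tcomp C g f) = tcomp C (tcomp C h g) f"
  using cat4 by blast
lemma zero_src[simp]: "tsrc C (tzero C X Y) = X" using pre1 unfolding hom_def by blast
lemma zero_tgt[simp]: "ttgt C (tzero C X Y) = Y" using pre1 unfolding hom_def by blast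
lemma neg_src[simp]: "tsrc C (tneg C f) = tsrc C f" using pre3 unfolding hom_def by blast
lemma neg_tgt[simp]: "ttgt C (tneg C f) = ttgt C f" using pre3 unfolding hom_def by blast
lemma add_src[simp]: "tsrc C f = tsrc C g \<Longrightarrow> ttgt C f = ttgt C g \<Longrightarrow> tsrc C (tadd C f g) = tsrc C f"
  using pre2[rule_format, where X="tsrc C f" and Y="ttgt C f" and f=f and g=g] unfolding hom_def by simp
lemma add_tgt[simp]: "tsrc C f = tsrc C g \<Longrightarrow> ttgt C f = ttgt C g \<Longrightarrow> ttgt C (tadd C f g) = ttgt C f"
  using pre2[rule_format, where X="tsrc C f" and Y="ttgt C f" and f=f and g=g] unfolding hom_def by simp

lemma add_ax: "tsrc C f = X \<Longrightarrow> ttgt C f = Y \<Longrightarrow> tsrc C g = X \<Longrightarrow> ttgt C g = Y \<Longrightarrow>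
   tsrc C h = X \<Longrightarrow> ttgt C h = Y \<Longrightarrow>
        tadd C (tadd C f g) h = tadd C f (tadd C g h) \<and>
        tadd C f g = tadd C g f \<and>
        tadd C f (tzero C X Y) = f \<and>
        tadd C f (tneg C f) = tzero C X Y"
  using pre4[rule_format, where X=X and Y=Y and f=f and g=g and h=h] unfolding hom_def by blast
lemma add_assoc: assumes "tsrc C f = X" "ttgt C f = Y" "tsrc C g = X" "ttgt C g = Y"
   "tsrc C h = X" "ttgt C h = Y" shows "tadd C (tadd C f g) h = tadd C f (tadd C g h)"
  using add_ax[OF assms] by blast
lemma add_comm: assumes "tsrc C f = tsrc C g" "ttgt C f = ttgt C g" shows "tadd C f g = tadd C g f"
  using add_ax[OF refl refl assms(1)[symmetric] assms(2)[symmetric] assms(1)[symmetric] assms(2)[symmetric]] by blast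
lemma add_0_r[simp]: assumes "tsrc C f = X" "ttgt C f = Y" shows "tadd C f (tzero C X Y) = f"
  using add_ax[OF assms assms assms] by blast
lemma add_0_l[simp]: "tsrc C f = X \<Longrightarrow> ttgt C f = Y \<Longrightarrow> tadd C (tzero C X Y) f = f"
proof -
  assume a: "tsrc C f = X" "ttgt C f = Y"
  have "tadd C (tzero C X Y) f = tadd C f (tzero C X Y)" using a by (intro add_comm) auto
  thus ?thesis using a add_0_r by simp
qed
lemma add_neg_r[simp]: "tadd C f (tneg C f) = tzero C (tsrc C f) (ttgt C f)"
  using add_ax[OF refl refl refl refl refl refl] by blast
lemma add_neg_l[simp]: "tadd C (tneg C f) f = tzero C (tsrc C f) (ttgt C f)"
proof -
  have "tadd C (tneg C f) f = tadd C f (tneg C f)" by (intro add_comm) auto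
  thus ?thesis using add_neg_r by simp
qed
lemma distr_l: "f \<in> hom C X Y \<Longrightarrow> g \<in> hom C X Y \<Longrightarrow> h \<in> hom C Y W \<Longrightarrow>
        tcomp C h (tadd C f g) = tadd C (tcomp C h f) (tcomp C h g)"
proof -
  assume a: "f \<in> hom C X Y" "g \<in> hom C X Y" "h \<in> hom C Y W"
  have "tid C X \<in> hom C X X" by (simp add: hom_def)
  thus ?thesis using a pre5[rule_format, where V=X and X=X and Y=Y and W=W and f=f and g=g and h=h and k="tid C X"] by blast
qed
lemma distr_r: "f \<in> hom C X Y \<Longrightarrow> g \<in> hom C X Y \<Longrightarrow> k \<in> hom C V X \<Longrightarrow>
        tcomp C (tadd C f g) k = tadd C (tcomp C f k) (tcomp C g k)"
proof -
  assume a: "f \<in> hom C X Y" "g \<in> hom C X Y" "k \<in> hom C V X"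
  have "tid C Y \<in> hom C Y Y" by (simp add: hom_def)
  thus ?thesis using a pre5[rule_format, where V=V and X=X and Y=Y and W=Y and f=f and g=g and h="tid C Y" and k=k] by blast
qed

lemma cancel: assumes "tsrc C f = X" "ttgt C f = Y" "tsrc C g = X" "ttgt C g = Y"
  "tsrc C k = X" "ttgt C k = Y" "tadd C f g = tadd C f k" shows "g = k"
proof -
  have "g = tadd C (tadd C (tneg C f) f) g" using assms by simp
  also have "\<dots> = tadd C (tneg C f) (tadd C f g)" using assms by (intro add_assoc[of _ X Y]) auto
  also have "\<dots> = tadd C (tneg C f) (tadd C f k)" using assms by simp
  also have "\<dots> = tadd C (tadd C (tneg C f) f) k" using assms by (intro add_assoc[symmetric, of _ X Y]) auto
  also have "\<dots> = k" using assms by simp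
  finally show ?thesis .
qed

lemma comp_0_r[simp]: assumes "tsrc C h = Y" shows "tcomp C h (tzero C X Y) = tzero C X (ttgt C h)"
proof -
  let ?z = "tcomp C h (tzero C X Y)"
  have "tadd C ?z ?z = tcomp C h (tadd C (tzero C X Y) (tzero C X Y))"
    using assms by (intro distr_l[symmetric, of "tzero C X Y" X Y "tzero C X Y" h "ttgt C h"]) (auto simp: hom_def)
  also have "\<dots> = ?z" by simp
  also have "\<dots> = tadd C ?z (tzero C X (ttgt C h))" using assms by simp
  finally have e: "tadd C ?z ?z = tadd C ?z (tzero C X (ttgt C h))" .
  show ?thesis by (rule cancel[OF _ _ _ _ _ _ e]) (use assms in simp_all)
qed

lemma comp_0_l[simp]: assumes "ttgt C k = Y" shows "tcomp C (tzero C Y W) k = tzero C (tsrc C k) W"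
proof -
  let ?z = "tcomp C (tzero C Y W) k"
  have "tadd C ?z ?z = tcomp C (tadd C (tzero C Y W) (tzero C Y W)) k"
    using assms by (intro distr_r[symmetric, of "tzero C Y W" Y W "tzero C Y W" k "tsrc C k"]) (auto simp: hom_def)
  also have "\<dots> = ?z" by simp
  also have "\<dots> = tadd C ?z (tzero C (tsrc C k) W)" using assms by simp
  finally have e: "tadd C ?z ?z = tadd C ?z (tzero C (tsrc C k) W)" .
  show ?thesis by (rule cancel[OF _ _ _ _ _ _ e]) (use assms in simp_all)
qed

lemma neg_unique: assumes "tsrc C g = tsrc C f" "ttgt C g = ttgt C f"
  "tadd C f g = tzero C (tsrc C f) (ttgt C f)" shows "g = tneg C f"
  by (rule cancel[of f "tsrc C f" "ttgt C f"]) (use assms in simp_all)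

lemma neg_neg[simp]: "tneg C (tneg C f) = f"
  by (rule neg_unique[symmetric]) auto

lemma neg_zero[simp]: "tneg C (tzero C X Y) = tzero C X Y"
  by (rule neg_unique[symmetric]) auto

lemma neg_inj: "tneg C f = tneg C g \<Longrightarrow> f = g" by (metis neg_neg)

lemma comp_neg_r: assumes "tsrc C h = ttgt C f" shows "tcomp C h (tneg C f) = tneg C (tcomp C h f)"
proof (rule neg_unique)
  show "tadd C (tcomp C h f) (tcomp C h (tneg C f)) =
    tzero C (tsrc C (tcomp C h f)) (ttgt C (tcomp C h f))"
    using assms distr_l[symmetric, of f "tsrc C f" "ttgt C f" "tneg C f" h "ttgt C h"]
    by (auto simp: hom_def)
qed (use assms in auto)

lemma comp_neg_l: assumes "tsrc C f = ttgt C k" shows "tcomp C (tneg C f) k = tneg C (tcomp C f k)"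
proof (rule neg_unique)
  show "tadd C (tcomp C f k) (tcomp C (tneg C f) k) =
    tzero C (tsrc C (tcomp C f k)) (ttgt C (tcomp C f k))"
    using assms distr_r[symmetric, of f "tsrc C f" "ttgt C f" "tneg C f" k "tsrc C k"]
    by (auto simp: hom_def)
qed (use assms in auto)

lemma sh1: "\<forall>f. tshm C f \<in> hom C (tsh C (tsrc C f)) (tsh C (ttgt C f))"
  using Tsh[unfolded shift_ok_def, THEN conjunct1] .
lemma shm_src[simp]: "tsrc C (tshm C f) = tsh C (tsrc C f)" using sh1 unfolding hom_def by blast
lemma shm_tgt[simp]: "ttgt C (tshm C f) = tsh C (ttgt C f)" using sh1 unfolding hom_def by blast
lemma shm_id[simp]: "tshm C (tid C X) = tid C (tsh C X)"
  using Tsh[unfolded shift_ok_def, THEN conjunct2, THEN conjunct1] by blast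
lemma shm_comp: "tsrc C g = ttgt C f \<Longrightarrow> tshm C (tcomp C g f) = tcomp C (tshm C g) (tshm C f)"
  using Tsh[unfolded shift_ok_def, THEN conjunct2, THEN conjunct2, THEN conjunct1] by blast
lemma shm_bij: "bij_betw (tshm C) (hom C X Y) (hom C (tsh C X) (tsh C Y))"
  using Tsh[unfolded shift_ok_def, THEN conjunct2, THEN conjunct2, THEN conjunct2, THEN conjunct2, THEN conjunct1] by blast

end

context tri begin

lemma assocR: "tsrc C g = ttgt C f \<Longrightarrow> tsrc C h = ttgt C g \<Longrightarrow>
        tcomp C (tcomp C h g) f = tcomp C h (tcomp C g f)"
  by (simp add: assoc)

lemma rot: assumes "(f, g, h) \<in> tdist C" shows "(g, h, tneg C (tshm C f)) \<in> tdist C"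
  using TR2[OF dist_tri[OF assms] assms] .

lemma tri_st: assumes "(f, g, h) \<in> tdist C"
  shows "tsrc C g = ttgt C f" "tsrc C h = ttgt C g" "ttgt C h = tsh C (tsrc C f)"
  using dist_tri[OF assms] unfolding is_triangle_def by auto

lemma CZ: assumes d: "(f, g, h) \<in> tdist C" shows "tcomp C g f = tzero C (tsrc C f) (ttgt C g)"
proof -
  obtain Z where Z: "is_zero_obj C Z" using zero_ex by blast
  let ?X = "tsrc C f"
  have T0: "(tid C ?X, tzero C ?X Z, tzero C Z (tsh C ?X)) \<in> tdist C" using TR1[OF Z] .
  obtain c where c: "tri_morph C (tid C ?X, tzero C ?X Z, tzero C Z (tsh C ?X)) (f, g, h) (tid C ?X) f c"
    using TR3[OF T0 d, of "tid C ?X" f] by (auto simp: hom_def)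
  hence "c \<in> hom C Z (ttgt C g)" "tcomp C g f = tcomp C c (tzero C ?X Z)"
    unfolding tri_morph_def by auto
  thus ?thesis by (simp add: hom_def)
qed

lemma E: assumes d: "(f, g, h) \<in> tdist C" and x: "x \<in> hom C W (ttgt C f)"
  and gx: "tcomp C g x = tzero C W (ttgt C g)"
  shows "\<exists>y \<in> hom C W (tsrc C f). x = tcomp C f y"
proof -
  obtain Z where Z: "is_zero_obj C Z" using zero_ex by blast
  have T0: "(tid C W, tzero C W Z, tzero C Z (tsh C W)) \<in> tdist C" using TR1[OF Z] .
  have R1: "(tzero C W Z, tzero C Z (tsh C W), tneg C (tid C (tsh C W))) \<in> tdist C"
    using rot[OF T0] by simp
  have R2: "(g, h, tneg C (tshm C f)) \<in> tdist C" using rot[OF d] .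
  note st = tri_st[OF d]
  have xs: "tsrc C x = W" "ttgt C x = ttgt C f" using x by (auto simp: hom_def)
  obtain c where c: "tri_morph C (tzero C W Z, tzero C Z (tsh C W), tneg C (tid C (tsh C W)))
     (g, h, tneg C (tshm C f)) x (tzero C Z (ttgt C g))  c"
    using TR3[OF R1 R2, of x "tzero C Z (ttgt C g)"] x st gx by (auto simp: hom_def)
  hence chom: "c \<in> hom C (tsh C W) (tsh C (tsrc C f))"
    and sq: "tcomp C (tneg C (tshm C f)) c = tcomp C (tshm C x) (tneg C (tid C (tsh C W)))"
    unfolding tri_morph_def using st by auto
  have cs: "tsrc C c = tsh C W" "ttgt C c = tsh C (tsrc C f)" using chom by (auto simp: hom_def)
  have "tneg C (tcomp C (tshm C f) c) = tneg C (tshm C x)"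
    using sq cs xs by (simp add: comp_neg_l comp_neg_r)
  hence fc: "tcomp C (tshm C f) c = tshm C x" by (rule neg_inj)
  have "c \<in> tshm C ` hom C W (tsrc C f)" using chom shm_bij[of W "tsrc C f"]
    by (simp add: bij_betw_def)
  then obtain y where y: "y \<in> hom C W (tsrc C f)" and cy: "c = tshm C y" by blast
  have ys: "tsrc C y = W" "ttgt C y = tsrc C f" using y by (auto simp: hom_def)
  have "tshm C (tcomp C f y) = tshm C x" using fc cy ys shm_comp[of f y] by simp
  moreover have "tcomp C f y \<in> hom C W (ttgt C f)" using ys by (simp add: hom_def)
  moreover have "inj_on (tshm C) (hom C W (ttgt C f))" using shm_bij[of W "ttgt C f"]
    by (simp add: bij_betw_def)
  ultimately have "tcomp C f y = x" using x by (meson inj_onD)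
  thus ?thesis using y by blast
qed

lemma hsum_st: "(\<forall>k<n. tsrc C (F k) = X \<and> ttgt C (F k) = Y) \<Longrightarrow>
   tsrc C (hsum C X Y F n) = X \<and> ttgt C (hsum C X Y F n) = Y"
  by (induction n) auto

lemma hsum_cong: "(\<forall>k<n. F k = G k) \<Longrightarrow> hsum C X Y F n = hsum C X Y G n"
  by (induction n) auto

lemma hsum_comp: assumes "\<forall>k<n. tsrc C (F k) = P \<and> ttgt C (F k) = P"
  and gs: "tsrc C g = P" "ttgt C g = Q" "tsrc C s = Q" "ttgt C s = P"
  shows "hsum C Q Q (\<lambda>k. tcomp C (tcomp C g (F k)) s) n = tcomp C (tcomp C g (hsum C P P F n)) s"
  using assms(1)
proof (induction n)
  case 0
  then show ?case using gs by simp
next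
  case (Suc n)
  have F: "tsrc C (F n) = P" "ttgt C (F n) = P" using Suc.prems by auto
  have H: "tsrc C (hsum C P P F n) = P" "ttgt C (hsum C P P F n) = P" using hsum_st[of n F P P] Suc.prems by auto
  have "hsum C Q Q (\<lambda>k. tcomp C (tcomp C g (F k)) s) (Suc n) =
     tadd C (tcomp C (tcomp C g (hsum C P P F n)) s) (tcomp C (tcomp C g (F n)) s)"
    using Suc by simp
  also have "\<dots> = tcomp C (tadd C (tcomp C g (hsum C P P F n)) (tcomp C g (F n))) s"
    using F H gs by (intro distr_r[symmetric, of _ P Q]) (auto simp: hom_def)
  also have "\<dots> = tcomp C (tcomp C g (tadd C (hsum C P P F n) (F n))) s"
    using F H gs by (subst distr_l[of _ P P _ g Q]) (auto simp: hom_def)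
  finally show ?case by simp
qed


lemma pow_step: assumes "is_power C U (Suc n) P"
  shows "\<exists>a g h. (a, g, h) \<in> tdist C \<and> tsrc C a = U \<and> ttgt C a = P \<and> is_power C U n (ttgt C g)"
proof -
  obtain i p where ip: "\<forall>k<Suc n. i k \<in> hom C U P \<and> p k \<in> hom C P U"
    and orth: "\<forall>k<Suc n. \<forall>l<Suc n. tcomp C (p k) (i l) = (if k = l then tid C U else tzero C U U)"
    and hs: "hsum C P P (\<lambda>k. tcomp C (i k) (p k)) (Suc n) = tid C P"
    using assms unfolding is_power_def by blast
  have ips: "\<And>k. k < Suc n \<Longrightarrow> tsrc C (i k) = U \<and> ttgt C (i k) = P \<and> tsrc C (p k) = P \<and> ttgt C (p k) = U"
    using ip by (auto simp: hom_def)
  define a where "a = i n"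
  define b where "b = p n"
  have a_s: "tsrc C a = U" "ttgt C a = P" and b_s: "tsrc C b = P" "ttgt C b = U"
    using ips[of n] by (auto simp: a_def b_def)
  have ba: "tcomp C b a = tid C U" using orth a_def b_def by auto
  obtain g h where d: "(a, g, h) \<in> tdist C" using TR1ex by blast
  note st = tri_st[OF d]
  define Q where "Q = ttgt C g"
  have g_s: "tsrc C g = P" "ttgt C g = Q" and h_s: "tsrc C h = Q" "ttgt C h = tsh C U"
    using st a_s Q_def by auto
  have ga: "tcomp C g a = tzero C U Q" using CZ[OF d] a_s g_s by simp
  have d2: "(h, tneg C (tshm C a), tneg C (tshm C g)) \<in> tdist C" using rot[OF rot[OF d]] .
  have "tcomp C (tneg C (tshm C a)) h = tzero C Q (tsh C P)" using CZ[OF d2] h_s a_s by simp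
  hence "tneg C (tcomp C (tshm C a) h) = tneg C (tzero C Q (tsh C P))"
    using h_s a_s by (simp add: comp_neg_l)
  hence ah: "tcomp C (tshm C a) h = tzero C Q (tsh C P)" by (rule neg_inj)
  have "tcomp C (tshm C b) (tshm C a) = tid C (tsh C U)"
    using shm_comp[of b a] a_s b_s ba by simp
  hence "h = tcomp C (tcomp C (tshm C b) (tshm C a)) h" using h_s by simp
  also have "\<dots> = tcomp C (tshm C b) (tcomp C (tshm C a) h)"
    using a_s b_s h_s by (simp add: assocR)
  also have "\<dots> = tzero C Q (tsh C U)" using ah b_s by simp
  finally have h0: "h = tzero C Q (tsh C U)" .
  have d1: "(g, h, tneg C (tshm C a)) \<in> tdist C" using rot[OF d] .
  obtain s where s: "s \<in> hom C Q (tsrc C g)" and gs: "tid C Q = tcomp C g s"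
    using E[OF d1, of "tid C Q" Q] g_s h0 h_s by (auto simp: hom_def)
  have s_s: "tsrc C s = Q" "ttgt C s = P" using s g_s by (auto simp: hom_def)
  define m where "m = tcomp C a (tcomp C b s)"
  have m_s: "tsrc C m = Q" "ttgt C m = P" using a_s b_s s_s m_def by auto
  define s' where "s' = tadd C s (tneg C m)"
  have s'_s: "tsrc C s' = Q" "ttgt C s' = P" using s_s m_s s'_def by auto
  have gm: "tcomp C g m = tzero C Q Q"
    unfolding m_def using a_s b_s s_s g_s ga by (simp add: assoc)
  have gs': "tcomp C g s' = tid C Q"
  proof -
    have "tcomp C g s' = tadd C (tcomp C g s) (tcomp C g (tneg C m))"
      unfolding s'_def using s_s m_s g_s by (intro distr_l[of _ Q P _ g Q]) (auto simp: hom_def)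
    also have "\<dots> = tid C Q" using gs[symmetric] gm m_s g_s by (simp add: comp_neg_r)
    finally show ?thesis .
  qed
  have bm: "tcomp C b m = tcomp C b s"
    unfolding m_def using a_s b_s s_s ba by (simp add: assoc)
  have bs': "tcomp C b s' = tzero C Q U"
  proof -
    have "tcomp C b s' = tadd C (tcomp C b s) (tcomp C b (tneg C m))"
      unfolding s'_def using s_s m_s b_s by (intro distr_l[of _ Q P _ b U]) (auto simp: hom_def)
    also have "\<dots> = tzero C Q U" using bm m_s b_s s_s by (simp add: comp_neg_r)
    finally show ?thesis .
  qed
  define x where "x = tadd C (tid C P) (tneg C (tcomp C s' g))"
  have x_s: "tsrc C x = P" "ttgt C x = P" using x_def s'_s g_s by auto
  have gx: "tcomp C g x = tzero C P Q"
  proof -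
    have "tcomp C g x = tadd C (tcomp C g (tid C P)) (tcomp C g (tneg C (tcomp C s' g)))"
      unfolding x_def using s'_s g_s by (intro distr_l[of _ P P _ g Q]) (auto simp: hom_def)
    also have "\<dots> = tadd C g (tneg C (tcomp C (tcomp C g s') g))"
      using s'_s g_s by (simp add: comp_neg_r assoc)
    also have "\<dots> = tzero C P Q" using gs' g_s by simp
    finally show ?thesis .
  qed
  obtain t where t: "t \<in> hom C P U" and xt: "x = tcomp C a t"
    using E[OF d, of x P] x_s a_s g_s gx by (auto simp: hom_def)
  have t_s: "tsrc C t = P" "ttgt C t = U" using t by (auto simp: hom_def)
  have "tcomp C b x = t" using xt a_s b_s t_s ba by (simp add: assoc)
  moreover have "tcomp C b x = b"
  proof -
    have "tcomp C b x = tadd C (tcomp C b (tid C P)) (tcomp C b (tneg C (tcomp C s' g)))"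
      unfolding x_def using s'_s g_s b_s by (intro distr_l[of _ P P _ b U]) (auto simp: hom_def)
    also have "\<dots> = tadd C b (tneg C (tcomp C (tcomp C b s') g))"
      using s'_s g_s b_s by (simp add: comp_neg_r assoc)
    also have "\<dots> = b" using bs' g_s b_s by simp
    finally show ?thesis .
  qed
  ultimately have xab: "x = tcomp C a b" using xt by simp
  have E1: "tadd C (tcomp C a b) (tcomp C s' g) = tid C P"
  proof -
    have "tadd C (tcomp C a b) (tcomp C s' g) = tadd C x (tcomp C s' g)" using xab by simp
    also have "\<dots> = tadd C (tid C P) (tadd C (tneg C (tcomp C s' g)) (tcomp C s' g))"
      unfolding x_def using s'_s g_s by (intro add_assoc[of _ P P]) auto
    also have "\<dots> = tid C P" using s'_s g_s by simp
    finally show ?thesis .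
  qed
  define i' where "i' = (\<lambda>k. tcomp C g (i k))"
  define p' where "p' = (\<lambda>k. tcomp C (p k) s')"
  have PA: "\<forall>k<n. i' k \<in> hom C U Q \<and> p' k \<in> hom C Q U"
      using ips g_s s'_s by (auto simp: hom_def i'_def p'_def)
  have PB: "\<forall>k<n. \<forall>l<n. tcomp C (p' k) (i' l) = (if k = l then tid C U else tzero C U U)"
    proof (intro allI impI)
    fix k l assume k: "k < n" and l: "l < n"
    have ik: "tsrc C (i l) = U" "ttgt C (i l) = P" "tsrc C (p k) = P" "ttgt C (p k) = U"
      using ips[of k] ips[of l] k l by auto
    have pa: "tcomp C (p k) a = tzero C U U" using orth k unfolding a_def by auto
    have "tcomp C (p k) (i l) = tcomp C (p k) (tcomp C (tid C P) (i l))" using ik by simp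
    also have "\<dots> = tcomp C (p k) (tcomp C (tadd C (tcomp C a b) (tcomp C s' g)) (i l))"
      using E1 by simp
    also have "\<dots> = tcomp C (p k) (tadd C (tcomp C (tcomp C a b) (i l)) (tcomp C (tcomp C s' g) (i l)))"
      using ik a_s b_s s'_s g_s by (subst distr_r[of _ P P _ "i l" U]) (auto simp: hom_def)
    also have "\<dots> = tadd C (tcomp C (p k) (tcomp C (tcomp C a b) (i l))) (tcomp C (p k) (tcomp C (tcomp C s' g) (i l)))"
      using ik a_s b_s s'_s g_s by (subst distr_l[of _ U P _ "p k" U]) (auto simp: hom_def)
    also have "\<dots> = tadd C (tcomp C (tcomp C (p k) a) (tcomp C b (i l))) (tcomp C (p' k) (i' l))"
      using ik a_s b_s s'_s g_s unfolding p'_def i'_def by (simp add: assoc)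
    also have "\<dots> = tcomp C (p' k) (i' l)"
      using pa ik a_s b_s s'_s g_s unfolding p'_def i'_def by simp
    finally show "tcomp C (p' k) (i' l) = (if k = l then tid C U else tzero C U U)"
      using orth k l by simp
    qed
  have PC: "hsum C Q Q (\<lambda>k. tcomp C (i' k) (p' k)) n = tid C Q"
  proof -
    have F: "\<forall>k<n. tsrc C (tcomp C (i k) (p k)) = P \<and> ttgt C (tcomp C (i k) (p k)) = P"
      using ips by auto
    have "hsum C Q Q (\<lambda>k. tcomp C (i' k) (p' k)) n = hsum C Q Q (\<lambda>k. tcomp C (tcomp C g (tcomp C (i k) (p k))) s') n"
      using ips g_s s'_s unfolding i'_def p'_def by (intro hsum_cong) (auto simp: assoc)
    also have "\<dots> = tcomp C (tcomp C g (hsum C P P (\<lambda>k. tcomp C (i k) (p k)) n)) s'"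
      using hsum_comp[OF F g_s s'_s] .
    also have "\<dots> = tid C Q"
    proof -
      let ?H = "hsum C P P (\<lambda>k. tcomp C (i k) (p k)) n"
      have H: "tsrc C ?H = P" "ttgt C ?H = P" using hsum_st[OF F] by auto
      have hs': "tadd C ?H (tcomp C a b) = tid C P" using hs a_def b_def by simp
      have "tid C Q = tcomp C (tcomp C g (tid C P)) s'" using gs' g_s by simp
      also have "\<dots> = tcomp C (tcomp C g (tadd C ?H (tcomp C a b))) s'" using hs' by simp
      also have "\<dots> = tcomp C (tadd C (tcomp C g ?H) (tcomp C g (tcomp C a b))) s'"
        using H a_s b_s g_s by (subst distr_l[of _ P P _ g Q]) (auto simp: hom_def)
      also have "\<dots> = tadd C (tcomp C (tcomp C g ?H) s') (tcomp C (tcomp C g (tcomp C a b)) s')"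
        using H a_s b_s g_s s'_s by (subst distr_r[of _ P Q _ s' Q]) (auto simp: hom_def)
      also have "\<dots> = tadd C (tcomp C (tcomp C g ?H) s') (tcomp C (tcomp C (tcomp C g a) b) s')"
        using a_s b_s g_s by (simp add: assoc)
      also have "\<dots> = tcomp C (tcomp C g ?H) s'"
        using ga H a_s b_s g_s s'_s by simp
      finally show ?thesis by simp
    qed
    finally show "hsum C Q Q (\<lambda>k. tcomp C (i' k) (p' k)) n = tid C Q" .
  qed
  have "is_power C U n Q" unfolding is_power_def using PA PB PC by blast
  thus ?thesis using d a_s Q_def by blast
qed


lemma rel_in: "(f, g, h) \<in> tdist C \<Longrightarrow>
   (\<lambda>x. gen (ttgt C f) x - gen (tsrc C f) x - gen (ttgt C g) x) \<in> groth_rels C"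
  unfolding groth_rels_def by blast

end

lemma qspan_sub: assumes "is_Q_subspace H" "S \<subseteq> H" shows "qspan S \<subseteq> H"
proof
  fix v assume "v \<in> qspan S" thus "v \<in> H"
    by induction (use assms in \<open>auto simp: is_Q_subspace_def\<close>)
qed

lemma qspan_mono: assumes "S \<subseteq> S'" shows "qspan S \<subseteq> qspan S'"
proof
  fix v assume "v \<in> qspan S" thus "v \<in> qspan S'"
    by induction (use assms in \<open>auto intro: qspan.intros\<close>)
qed

lemma lin: assumes "is_Q_subspace H" "u \<in> H" "v \<in> H" shows "(\<lambda>x. a * u x + b * v x) \<in> H"
proof -
  have "(\<lambda>x. a * u x) \<in> H" "(\<lambda>x. b * v x) \<in> H" using assms unfolding is_Q_subspace_def by auto
  thus ?thesis using assms(1) unfolding is_Q_subspace_def by auto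
qed

lemma lin_eq: assumes "is_Q_subspace H" "u \<in> H" "v \<in> H" "w = (\<lambda>x. a * u x + b * v x)" shows "w \<in> H"
  using lin[OF assms(1-3)] assms(4) by simp

context tri begin

lemma rel_H: "groth_rels C \<subseteq> H \<Longrightarrow> (f, g, h) \<in> tdist C \<Longrightarrow>
   (\<lambda>x. gen (ttgt C f) x - gen (tsrc C f) x - gen (ttgt C g) x) \<in> H"
  using rel_in by blast

lemma zero_gen: assumes HS: "is_Q_subspace H" and RH: "groth_rels C \<subseteq> H" and Z: "is_zero_obj C Z"
  shows "gen Z \<in> H"
proof -
  have r: "(\<lambda>x. gen Z x - gen Z x - gen Z x) \<in> H" using rel_H[OF RH TR1[OF Z, of Z]] by simp
  show ?thesis by (rule lin_eq[OF HS r r, of _ "-1" 0]) (simp add: fun_eq_iff)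
qed

lemma shift_gen: assumes HS: "is_Q_subspace H" and RH: "groth_rels C \<subseteq> H"
  shows "gen (tsh C X) \<in> H \<longleftrightarrow> gen X \<in> H"
proof -
  obtain Z where Z: "is_zero_obj C Z" using zero_ex by blast
  have r: "(\<lambda>x. gen Z x - gen X x - gen (tsh C X) x) \<in> H"
    using rel_H[OF RH rot[OF TR1[OF Z, of X]]] by simp
  have z: "gen Z \<in> H" using zero_gen[OF HS RH Z] .
  have q: "(\<lambda>x. gen X x + gen (tsh C X) x) \<in> H" by (rule lin_eq[OF HS z r, of _ 1 "-1"]) (simp add: fun_eq_iff)
  show ?thesis
  proof
    assume a: "gen (tsh C X) \<in> H" show "gen X \<in> H" by (rule lin_eq[OF HS q a, of _ 1 "-1"]) (simp add: fun_eq_iff)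
  next
    assume a: "gen X \<in> H" show "gen (tsh C X) \<in> H" by (rule lin_eq[OF HS q a, of _ 1 "-1"]) (simp add: fun_eq_iff)
  qed
qed

lemma id_iso: "is_iso C (tid C X)" unfolding is_iso_def by (auto simp: hom_def)

lemma iso_gen: assumes HS: "is_Q_subspace H" and RH: "groth_rels C \<subseteq> H"
  and XY: "isomorphic C X Y" and X: "gen X \<in> H" shows "gen Y \<in> H"
proof -
  obtain f where f: "f \<in> hom C X Y" "is_iso C f" using XY unfolding isomorphic_def by blast
  have fs: "tsrc C f = X" "ttgt C f = Y" using f by (auto simp: hom_def)
  obtain Z where Z: "is_zero_obj C Z" using zero_ex by blast
  have T1: "(tid C X, tzero C X Z, tzero C Z (tsh C X)) \<in> tdist C" using TR1[OF Z] .
  have tr: "is_triangle C (f, tzero C Y Z, tzero C Z (tsh C X))"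
    unfolding is_triangle_def using fs by simp
  have tm: "tri_morph C (tid C X, tzero C X Z, tzero C Z (tsh C X)) (f, tzero C Y Z, tzero C Z (tsh C X))
     (tid C X) f (tid C Z)"
    unfolding tri_morph_def using fs by (simp add: hom_def)
  have d: "(f, tzero C Y Z, tzero C Z (tsh C X)) \<in> tdist C"
    using TR1iso[OF T1 tr tm id_iso f(2) id_iso] .
  have r: "(\<lambda>x. gen Y x - gen X x - gen Z x) \<in> H" using rel_H[OF RH d] fs by simp
  have z: "gen Z \<in> H" using zero_gen[OF HS RH Z] .
  have q: "(\<lambda>x. gen Y x - gen X x) \<in> H" by (rule lin_eq[OF HS r z, of _ 1 1]) (simp add: fun_eq_iff)
  show ?thesis by (rule lin_eq[OF HS q X, of _ 1 1]) (simp add: fun_eq_iff)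
qed

lemma cone_gen: assumes HS: "is_Q_subspace H" and RH: "groth_rels C \<subseteq> H"
  and d: "(f, g, h) \<in> tdist C" and "gen (tsrc C f) \<in> H" "gen (ttgt C f) \<in> H"
  shows "gen (ttgt C g) \<in> H"
proof -
  have r: "(\<lambda>x. gen (ttgt C f) x - gen (tsrc C f) x - gen (ttgt C g) x) \<in> H" using rel_H[OF RH d] .
  have q: "(\<lambda>x. gen (ttgt C f) x - gen (ttgt C g) x) \<in> H"
    by (rule lin_eq[OF HS r assms(4), of _ 1 1]) (simp add: fun_eq_iff)
  show ?thesis by (rule lin_eq[OF HS q assms(5), of _ "-1" 1]) (simp add: fun_eq_iff)
qed

lemma pow_gen: assumes HS: "is_Q_subspace H" and RH: "groth_rels C \<subseteq> H"
  shows "is_power C U n P \<Longrightarrow> (\<lambda>x. gen P x - of_nat n * gen U x) \<in> H"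
proof (induction n arbitrary: P)
  case 0
  then obtain i p :: "nat \<Rightarrow> 'm" where "hsum C P P (\<lambda>k. tcomp C (i k) (p k)) 0 = tid C P"
    unfolding is_power_def by blast
  hence "is_zero_obj C P" unfolding is_zero_obj_def by simp
  thus ?case using zero_gen[OF HS RH] by simp
next
  case (Suc n)
  obtain a g h where d: "(a, g, h) \<in> tdist C" and as: "tsrc C a = U" "ttgt C a = P"
    and pw: "is_power C U n (ttgt C g)" using pow_step[OF Suc.prems] by blast
  have r: "(\<lambda>x. gen P x - gen U x - gen (ttgt C g) x) \<in> H" using rel_H[OF RH d] as by simp
  have ih: "(\<lambda>x. gen (ttgt C g) x - of_nat n * gen U x) \<in> H" using Suc.IH[OF pw] .
  show ?case by (rule lin_eq[OF HS r ih, of _ 1 1]) (simp add: fun_eq_iff algebra_simps)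
qed

end

theorem lemma3p8:
  fixes C :: "('o, 'm) tricat" and H :: "('o \<Rightarrow> rat) set" and D :: "'o set"
  assumes "is_triangulated C"
    and "is_Q_subspace H" and "groth_rels C \<subseteq> H"
    and "D \<in> I_H C H"
    and "\<forall>D' \<in> I_H C H. D \<subseteq> D' \<longrightarrow> D' = D"
  shows "dense_subcat C D \<and> radical_subcat C D"
proof -
  interpret tri C by unfold_locales (rule assms(1))
  note HS = assms(2) and RH = assms(3)
  have DD: "dense_subcat C D" and imD: "image_GQ C D = H" using assms(4) unfolding I_H_def by auto
  define D' where "D' = {X. gen X \<in> H}"
  have sub: "D \<subseteq> D'"
  proof
    fix X assume "X \<in> D"
    hence "gen X \<in> image_GQ C D" unfolding image_GQ_def by (auto intro: qspan.base)
    thus "X \<in> D'" using imD D'_def by simp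
  qed
  have tsD': "triangulated_subcat C D'"
    unfolding triangulated_subcat_def
  proof (intro conjI allI impI)
    fix X Y assume "X \<in> D'" "isomorphic C X Y" thus "Y \<in> D'"
      using iso_gen[OF HS RH] unfolding D'_def by blast
  next
    fix X assume "X \<in> D'" thus "tsh C X \<in> D'" using shift_gen[OF HS RH, of X] unfolding D'_def by blast
  next
    fix X assume "tsh C X \<in> D'" thus "X \<in> D'" using shift_gen[OF HS RH, of X] unfolding D'_def by blast
  next
    fix f g h assume "(f, g, h) \<in> tdist C" "tsrc C f \<in> D'" "ttgt C f \<in> D'"
    thus "ttgt C g \<in> D'" using cone_gen[OF HS RH] unfolding D'_def by blast
  qed
  have dD': "dense_subcat C D'"
    using DD sub tsD' unfolding dense_subcat_def by blast
  have "image_GQ C D' \<subseteq> H" unfolding image_GQ_def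
    by (rule qspan_sub[OF HS]) (use RH in \<open>auto simp: D'_def\<close>)
  moreover have "H \<subseteq> image_GQ C D'" unfolding imD[symmetric] image_GQ_def
    by (rule qspan_mono) (use sub in auto)
  ultimately have "D' \<in> I_H C H" using dD' unfolding I_H_def by auto
  hence DE: "D' = D" using assms(5) sub by blast
  have "radical_subcat C D"
    unfolding radical_subcat_def
  proof (intro allI impI)
    fix U n P assume n: "1 \<le> n" and pw: "is_power C U n P" and P: "P \<in> D"
    have gP: "gen P \<in> H" using P DE D'_def by auto
    have q: "(\<lambda>x. gen P x - of_nat n * gen U x) \<in> H" using pow_gen[OF HS RH pw] .
    have "gen U \<in> H"
      by (rule lin_eq[OF HS gP q, of _ "1 / of_nat n" "- 1 / of_nat n"]) (use n in \<open>simp add: fun_eq_iff field_simps\<close>)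
    thus "U \<in> D" using DE D'_def by auto
  qed
  thus ?thesis using DD by blast
qed

end
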